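(* Let $q$ be a prime power and let $n_1,n_2$ be coprime odd positive integers, each coprime to $q$. If $x-1$ is the only SCRIM factor of $x^{n_1}-1$ and the only SCRIM factor of $x^{n_2}-1$ in $\mathbb{F}_{q^2}[x]$, then $x-1$ is the only SCRIM factor of $x^{n_1n_2}-1$ in $\mathbb{F}_{q^2}[x]$.
   Context: $\mathbb{F}_{q^2}$ is the finite field with $q^2$ elements. For $\alpha\in\mathbb{F}_{q^2}$ put $\bar\alpha=\alpha^q$, and for $f(x)=\sum_i f_ix^i$ put $\overline{f(x)}=\sum_i \bar f_i x^i$. For $f(x)$ with $f(0)\neq 0$, $f^*(x)=x^{\deg f}f(0)^{-1}f(1/x)$ and $f^\dagger(x)=\overline{f^*(x)}$. A polynomial is SCRIM if it is monic, irreducible over $\mathbb{F}_{q^2}$, has nonzero constant term, and satisfies $f=f^\dagger$. A SCRIM factor of $x^n-1$ is a SCRIM polynomial dividing $x^n-1$ in $\mathbb{F}_{q^2}[x]$. *)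

theory Defs
  imports "HOL-Computational_Algebra.Polynomial" "HOL-Number_Theory.Prime_Powers"
begin

text \<open>The ambient field is a finite field type 'a with CARD('a) = q^2.
  Conjugation: alpha |-> alpha^q, applied coefficientwise to polynomials.\<close>

definition conj_poly :: "nat \<Rightarrow> 'a::field poly \<Rightarrow> 'a poly" where
  "conj_poly q f = map_poly (\<lambda>a. a ^ q) f"

text \<open>f^*(x) = x^(deg f) * f(0)^(-1) * f(1/x); for f(0) nonzero,
  x^(deg f) f(1/x) is the reversed polynomial reflect_poly f.\<close>
definition recip_poly :: "'a::field poly \<Rightarrow> 'a poly" where
  "recip_poly f = smult (inverse (coeff f 0)) (reflect_poly f)"

definition dagger_poly :: "nat \<Rightarrow> 'a::field poly \<Rightarrow> 'a poly" where
  "dagger_poly q f = conj_poly q (recip_poly f)"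

definition SCRIM :: "nat \<Rightarrow> 'a::field poly \<Rightarrow> bool" where
  "SCRIM q f \<longleftrightarrow> lead_coeff f = 1 \<and> irreducible f \<and> coeff f 0 \<noteq> 0 \<and> f = dagger_poly q f"

definition SCRIM_factor :: "nat \<Rightarrow> nat \<Rightarrow> 'a::field poly \<Rightarrow> bool" where
  "SCRIM_factor q n f \<longleftrightarrow> SCRIM q f \<and> f dvd (monom 1 n - 1)"

end

theory Submission
  imports Defs "HOL-Computational_Algebra.Computational_Algebra"
begin

lemma coeff_pcompose_monom1:
  assumes "m > 0"
  shows "coeff (pcompose p (monom (1::'a::comm_ring_1) m)) k = (if m dvd k then coeff p (k div m) else 0)"
  using assms
proof (induction p arbitrary: k rule: pCons_induct)
  case 0
  then show ?case by simp
next
  case (pCons a p)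
  have e: "pcompose (pCons a p) (monom 1 m) = [:a:] + monom 1 m * pcompose p (monom 1 m)"
    by (simp add: pcompose_pCons)
  show ?case
  proof (cases "k = 0")
    case True
    then show ?thesis using pCons.prems by (simp add: e coeff_monom_mult)
  next
    case False
    show ?thesis
    proof (cases "m \<le> k")
      case True
      have "coeff (pcompose (pCons a p) (monom 1 m)) k = coeff (pcompose p (monom 1 m)) (k - m)"
        using False True by (simp add: e coeff_monom_mult coeff_pCons split: nat.split)
      also have "\<dots> = (if m dvd (k - m) then coeff p ((k - m) div m) else 0)"
        using pCons.IH pCons.prems by blast
      also have "\<dots> = (if m dvd k then coeff (pCons a p) (k div m) else 0)"
      proof -
        have d: "m dvd (k - m) \<longleftrightarrow> m dvd k" using True
          by (metis dvd_diff_nat dvd_refl le_add_diff_inverse2 dvd_add_left_iff)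
        have q: "(k - m) div m = k div m - 1" using True pCons.prems
        proof -
          have "k div m = (k - m + m) div m" using True by simp
          also have "\<dots> = (k - m) div m + 1" using pCons.prems by simp
          finally show ?thesis by simp
        qed
        have "k div m \<ge> 1" using True pCons.prems by (simp add: div_le_mono Suc_le_eq div_greater_zero_iff)
        then have "coeff (pCons a p) (k div m) = coeff p (k div m - 1)"
          by (cases "k div m") auto
        then show ?thesis using d q by simp
      qed
      finally show ?thesis .
    next
      case False2: False
      have "\<not> m dvd k" using False False2 by (auto dest: dvd_imp_le)
      then show ?thesis using False False2 by (simp add: e coeff_monom_mult coeff_pCons split: nat.split)
    qed
  qed
qed

lemma reflect_pcompose_monom:
  assumes "m > 0"
  shows "reflect_poly (pcompose p (monom (1::'a::{comm_ring_1,idom}) m)) = pcompose (reflect_poly p) (monom 1 m)"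
proof (rule poly_eqI)
  fix k
  have deg: "degree (pcompose p (monom (1::'a) m)) = degree p * m"
    by (simp add: degree_pcompose degree_monom_eq)
  show "coeff (reflect_poly (pcompose p (monom 1 m))) k = coeff (pcompose (reflect_poly p) (monom 1 m)) k"
  proof (cases "m dvd k")
    case True
    then obtain j where k: "k = m * j" by blast
    have "degree p * m - m * j = m * (degree p - j)" by (simp add: diff_mult_distrib2 mult.commute)
    then show ?thesis using assms k
      by (auto simp: coeff_reflect_poly deg coeff_pcompose_monom1 mult.commute)
  next
    case False
    have "\<not> m dvd (degree p * m - k)" if "k \<le> degree p * m"
      using False that by (metis dvd_diff_nat dvd_triv_right diff_diff_cancel)
    then show ?thesis using assms False
      by (auto simp: coeff_reflect_poly deg coeff_pcompose_monom1)
  qed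
qed

lemma map_poly_pcompose_monom:
  assumes "m > 0" "c 0 = 0"
  shows "map_poly c (pcompose p (monom (1::'a::comm_ring_1) m)) = pcompose (map_poly c p) (monom (1::'a) m)"
  by (rule poly_eqI) (simp add: coeff_map_poly assms coeff_pcompose_monom1)

lemma pcompose_monom_monom:
  assumes "m > 0"
  shows "pcompose (monom (1::'a::comm_ring_1) a) (monom 1 m) = monom 1 (a * m)"
  apply (rule poly_eqI)
  apply (auto simp: assms coeff_pcompose_monom1 coeff_monom)
  by (metis dvd_triv_right)


lemma frob_sum:
  assumes "prime CHAR('a::field)" "q = CHAR('a) ^ e"
  shows "(sum f A :: 'a) ^ q = sum (\<lambda>i. f i ^ q) A"
  using freshmans_dream_sum'[OF assms] .

lemma map_poly_frob_mult:
  assumes "prime CHAR('a::field)" "q = CHAR('a) ^ e"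
  shows "map_poly (\<lambda>a::'a. a ^ q) (p * r) = map_poly (\<lambda>a. a ^ q) p * map_poly (\<lambda>a. a ^ q) r"
proof -
  have q0: "q > 0" using assms by (simp add: prime_gt_0_nat)
  show ?thesis
  proof (rule poly_eqI)
    fix n
    have "coeff (map_poly (\<lambda>a::'a. a ^ q) (p * r)) n = (\<Sum>i\<le>n. coeff p i * coeff r (n - i)) ^ q"
      using q0 by (simp add: coeff_map_poly coeff_mult)
    also have "\<dots> = (\<Sum>i\<le>n. (coeff p i * coeff r (n - i)) ^ q)"
      by (rule frob_sum[OF assms])
    also have "\<dots> = coeff (map_poly (\<lambda>a. a ^ q) p * map_poly (\<lambda>a. a ^ q) r) n"
      using q0 by (simp add: coeff_map_poly coeff_mult power_mult_distrib)
    finally show "coeff (map_poly (\<lambda>a::'a. a ^ q) (p * r)) n = coeff (map_poly (\<lambda>a. a ^ q) p * map_poly (\<lambda>a. a ^ q) r) n" .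
  qed
qed

lemma dagger_mult:
  assumes "prime CHAR('a::field)" "q = CHAR('a) ^ e"
  and "coeff p 0 \<noteq> 0" "coeff r 0 \<noteq> 0"
  shows "dagger_poly q (p * r :: 'a poly) = dagger_poly q p * dagger_poly q r"
proof -
  have "recip_poly (p * r) = recip_poly p * recip_poly r"
    by (simp add: recip_poly_def reflect_poly_mult coeff_mult_0 mult_smult_left mult_smult_right mult.commute)
  then show ?thesis
    by (simp add: dagger_poly_def conj_poly_def map_poly_frob_mult[OF assms(1,2)])
qed

lemma dagger_pcompose:
  assumes "m > 0" "q > 0"
  shows "dagger_poly q (pcompose g (monom 1 m) :: 'a::field poly) = pcompose (dagger_poly q g) (monom 1 m)"
proof -
  have c0: "coeff (pcompose g (monom (1::'a) m)) 0 = coeff g 0"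
    using assms by (simp add: coeff_pcompose_monom1 poly_0_coeff_0)
  show ?thesis
    unfolding dagger_poly_def conj_poly_def recip_poly_def c0
    using assms by (simp add: reflect_pcompose_monom map_poly_pcompose_monom flip: pcompose_smult)
qed

lemma dagger_lead_degree:
  assumes "coeff g 0 \<noteq> 0" "q > 0"
  shows "lead_coeff (dagger_poly q (g :: 'a::field poly)) = 1 \<and> degree (dagger_poly q g) = degree g"
proof -
  have r: "degree (recip_poly g) = degree g" "lead_coeff (recip_poly g) = 1"
    using assms by (auto simp: recip_poly_def coeff_reflect_poly)
  have nz: "\<And>x::'a. x \<noteq> 0 \<Longrightarrow> x ^ q \<noteq> 0" by simp
  show ?thesis unfolding dagger_poly_def conj_poly_def
    using r assms by (simp add: degree_map_poly[OF nz] coeff_map_poly)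
qed



lemma ideal_dvd:
  fixes f g D :: "'a::field poly"
  assumes fu: "\<not> is_unit f" and gi: "irreducible g" and fg: "f dvd pcompose g r" and fD: "f dvd pcompose D r"
  shows "g dvd D"
proof -
  define I where "I = {h. f dvd pcompose h r}"
  have gI: "g \<in> I" "g \<noteq> 0" using fg gi by (auto simp: I_def)
  define P where "P = (\<lambda>n. \<exists>h\<in>I. h \<noteq> 0 \<and> degree h = n)"
  have "\<exists>n. P n" using gI P_def by blast
  then obtain n where Pn: "P n" and nmin: "\<forall>k<n. \<not> P k" using exists_least_iff[of P] by blast
  then obtain h0 where h0: "h0 \<in> I" "h0 \<noteq> 0" "degree h0 = n" unfolding P_def by blast
  have dv: "h0 dvd h" if "h \<in> I" for h
  proof -
    have "pcompose (h mod h0) r = pcompose h r - pcompose (h div h0) r * pcompose h0 r"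
      by (metis (no_types) pcompose_diff pcompose_mult minus_div_mult_eq_mod mult.commute)
    then have "h mod h0 \<in> I" using that h0(1) by (simp add: I_def)
    moreover have "h mod h0 = 0 \<or> degree (h mod h0) < degree h0" using degree_mod_less h0(2) by blast
    ultimately have "h mod h0 = 0" using nmin h0(3) P_def by blast
    then show ?thesis by (rule mod_0_imp_dvd)
  qed
  obtain w where gw: "g = h0 * w" using dv[OF gI(1)] by (elim dvdE)
  have "\<not> is_unit h0"
  proof
    assume "is_unit h0"
    moreover obtain c where "h0 = [:c:]" using `is_unit h0` is_unit_poly_iff by blast
    ultimately have "is_unit (pcompose h0 r)" by simp
    then show False using h0(1) fu I_def dvd_unit_imp_unit by blast
  qed
  then have "is_unit w" using gi gw by (metis irreducibleD)
  then have "g dvd h0" using gw by (simp add: dvd_mult_unit_iff)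
  moreover have "h0 dvd D" using dv fD I_def by blast
  ultimately show ?thesis by (rule dvd_trans)
qed

lemma key_lemma:
  fixes f g :: "'a::field poly"
  assumes ch: "prime CHAR('a)" "q = CHAR('a) ^ e"
  and sf: "SCRIM q f" and gl: "lead_coeff g = 1" and gi: "irreducible g"
  and gd: "g dvd monom 1 n - 1" and n: "n > 0" and m: "m > 0"
  and fd: "f dvd pcompose g (monom 1 m)"
  shows "SCRIM_factor q n g"
proof -
  have q0: "q > 0" using ch by (simp add: prime_gt_0_nat)
  have g0: "coeff g 0 \<noteq> 0"
  proof
    assume "coeff g 0 = 0"
    then have pg: "poly g 0 = 0" by (simp add: poly_0_coeff_0)
    from gd obtain k where "monom 1 n - 1 = g * k" by (elim dvdE)
    then have "poly (monom 1 n - 1) 0 = poly g 0 * poly k (0::'a)" by (metis poly_mult)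
    with pg show False using n by (simp add: poly_monom zero_power)
  qed
  define G where "G = pcompose g (monom (1::'a) m)"
  have G0: "coeff G 0 \<noteq> 0" using g0 m by (simp add: G_def coeff_pcompose_monom1 poly_0_coeff_0)
  from fd obtain k where Gk: "G = f * k" unfolding G_def by (elim dvdE)
  have f0: "coeff f 0 \<noteq> 0" and k0: "coeff k 0 \<noteq> 0" using G0 Gk by (auto simp: coeff_mult_0)
  have "dagger_poly q G = dagger_poly q f * dagger_poly q k" using Gk dagger_mult[OF ch f0 k0] by simp
  moreover have "dagger_poly q f = f" using sf by (simp add: SCRIM_def)
  ultimately have fD: "f dvd pcompose (dagger_poly q g) (monom 1 m)"
    using dagger_pcompose[OF m q0] G_def by (metis dvd_triv_left)
  define D where "D = dagger_poly q g"
  have Dl: "lead_coeff D = 1" "degree D = degree g" using dagger_lead_degree[OF g0 q0] D_def by auto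
  have gD: "g dvd D"
    using ideal_dvd[OF _ gi fd fD[folded D_def]] sf by (simp add: SCRIM_def irreducible_not_unit)
  then obtain c where Dc: "D = g * c" by (elim dvdE)
  have gnz: "g \<noteq> 0" using g0 by auto
  have cnz: "c \<noteq> 0" using Dc Dl by auto
  have "degree c = 0" using Dc Dl gnz cnz by (simp add: degree_mult_eq)
  moreover have "lead_coeff c = 1" using Dc Dl gl by (simp add: lead_coeff_mult)
  ultimately have "c = 1" by (metis degree_eq_zeroE one_poly_eq_simps(1) lead_coeff_pCons(1) coeff_pCons_0 pCons_0_0)
  then have "D = g" using Dc by simp
  then show ?thesis using gl gi g0 gd D_def by (simp add: SCRIM_factor_def SCRIM_def)
qed

lemma exists_factor:
  fixes f P :: "'a::field poly"
  assumes fi: "irreducible f" and fd: "f dvd pcompose P r" and P: "P \<noteq> 0"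
  shows "\<exists>g. lead_coeff g = 1 \<and> irreducible g \<and> g dvd P \<and> f dvd pcompose g r"
  using fd P
proof (induction "degree P" arbitrary: P rule: less_induct)
  case less
  have pf: "prime_elem f" using fi by (rule field_poly_irreducible_imp_prime)
  show ?case
  proof (cases "is_unit P")
    case True
    moreover obtain c where "P = [:c:]" using `is_unit P` is_unit_poly_iff by blast
    ultimately have "is_unit (pcompose P r)" by simp
    then have "is_unit f" using less.prems dvd_unit_imp_unit by blast
    then show ?thesis using fi irreducible_not_unit by blast
  next
    case nu: False
    show ?thesis
    proof (cases "irreducible P")
      case True
      define g where "g = smult (inverse (lead_coeff P)) P"
      have u: "is_unit [:inverse (lead_coeff P):]" using less.prems by (simp add: is_unit_const_poly_iff dvd_field_iff)
      have g2: "g = [:inverse (lead_coeff P):] * P" by (simp add: g_def)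
      have "irreducible g" unfolding g2 using True by (simp only: irreducible_mult_unit_left[OF u])
      moreover have "lead_coeff g = 1" using less.prems by (simp add: g_def)
      moreover have "g dvd P" unfolding g2 using u by (metis dvd_refl mult_unit_dvd_iff mult.commute)
      moreover have "f dvd pcompose g r" using less.prems g2
        by (simp add: pcompose_smult g_def dvd_smult)
      ultimately show ?thesis by blast
    next
      case False
      then obtain a b where ab: "P = a * b" "\<not> is_unit a" "\<not> is_unit b"
        using nu less.prems unfolding irreducible_def by blast
      have anz: "a \<noteq> 0" "b \<noteq> 0" using ab less.prems by auto
      have da: "degree a > 0" "degree b > 0" using ab anz by (auto simp: is_unit_iff_degree)
      have deg: "degree P = degree a + degree b" using ab anz by (simp add: degree_mult_eq)
      have "f dvd pcompose a r * pcompose b r" using less.prems ab by (simp add: pcompose_mult)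
      then have "f dvd pcompose a r \<or> f dvd pcompose b r" using pf prime_elem_dvd_mult_iff by blast
      then show ?thesis
      proof
        assume "f dvd pcompose a r"
        then obtain g where "lead_coeff g = 1 \<and> irreducible g \<and> g dvd a \<and> f dvd pcompose g r"
          using less.hyps[of a] deg da anz by auto
        then show ?thesis using ab by (meson dvd_mult2)
      next
        assume "f dvd pcompose b r"
        then obtain g where "lead_coeff g = 1 \<and> irreducible g \<and> g dvd b \<and> f dvd pcompose g r"
          using less.hyps[of b] deg da anz by auto
        then show ?thesis using ab by (meson dvd_mult)
      qed
    qed
  qed
qed


lemma monom_dvd_monom_mult:
  "monom (1::'a::comm_ring_1) a - 1 dvd monom 1 (a * b) - 1"
proof -
  have "monom (1::'a) (a * b) = monom 1 a ^ b" by (simp add: monom_power)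
  then show ?thesis by (simp add: power_diff_1_eq)
qed

lemma card_zero_field:
  assumes "finite (UNIV :: 'a::field set)"
  shows "of_nat (card (UNIV :: 'a set)) = (0::'a)"
proof -
  have "(\<Sum>x\<in>(UNIV::'a set). x + 1) = (\<Sum>x\<in>UNIV. x)"
    by (rule sum.reindex_bij_witness[of _ "\<lambda>y. y - 1" "\<lambda>y. y + 1"]) auto
  then show ?thesis by (simp add: sum.distrib)
qed

lemma CHAR_eq_q:
  assumes "primepow q" "card (UNIV :: 'a::{finite,field} set) = q ^ 2"
  shows "\<exists>e. prime CHAR('a) \<and> q = CHAR('a) ^ e"
proof -
  obtain p k where pk: "prime p" "k > 0" "q = p ^ k" using assms(1) unfolding primepow_def by blast
  have pc: "prime CHAR('a)" by (rule prime_CHAR_semidom) (simp add: finite_imp_CHAR_pos)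
  have "CHAR('a) dvd card (UNIV :: 'a set)"
  proof -
    have "of_nat (card (UNIV::'a set)) = (0::'a)" by (rule card_zero_field) simp
    then show ?thesis by (simp add: of_nat_eq_0_iff_char_dvd)
  qed
  then have "CHAR('a) dvd p ^ (k * 2)" using assms(2) pk by (simp add: power_mult)
  then have "CHAR('a) dvd p" using pc prime_dvd_power by blast
  then have "CHAR('a) = p" using pc pk(1) primes_dvd_imp_eq by blast
  then show ?thesis using pc pk by blast
qed

lemma xm1: "[:-1, 1:] = monom (1::'a::comm_ring_1) 1 - 1"
  by (simp add: monom_Suc monom_0 one_pCons)

lemma one_sided:
  fixes f :: "'a::field poly"
  assumes ch: "prime CHAR('a)" "q = CHAR('a) ^ e"
  and n1: "n1 > 0" and n2: "n2 > 0"
  and S1: "{f :: 'a poly. SCRIM_factor q n1 f} = {[:-1, 1:]}"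
  and sf: "SCRIM_factor q (n1 * n2) f"
  shows "f dvd monom 1 n2 - 1"
proof -
  have "pcompose (monom (1::'a) n1 - 1) (monom 1 n2) = monom 1 (n1 * n2) - 1"
    using n2 by (simp add: pcompose_diff pcompose_1 pcompose_monom_monom)
  then have fd: "f dvd pcompose (monom (1::'a) n1 - 1) (monom 1 n2)" using sf by (simp add: SCRIM_factor_def)
  have nz: "monom (1::'a) n1 - 1 \<noteq> 0"
  proof
    assume "monom (1::'a) n1 - 1 = 0"
    then have "coeff (monom (1::'a) n1 - 1) n1 = 0" by simp
    then show False using n1 by simp
  qed
  have fi: "irreducible f" using sf by (simp add: SCRIM_factor_def SCRIM_def)
  obtain g where g: "lead_coeff g = 1" "irreducible g" "g dvd monom 1 n1 - 1" "f dvd pcompose g (monom 1 n2)"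
    using exists_factor[OF fi fd nz] by blast
  have "SCRIM_factor q n1 g" using key_lemma[OF ch _ g(1,2,3) n1 n2 g(4)] sf
    by (simp add: SCRIM_factor_def)
  then have "g = [:-1, 1:]" using S1 by blast
  moreover have "pcompose (monom 1 1 - 1) (monom (1::'a) n2) = monom 1 n2 - 1"
    using n2 by (simp add: pcompose_diff pcompose_1 pcompose_monom_monom)
  ultimately show ?thesis using g(4) by (simp only: xm1)
qed

theorem theorem2p9:
  fixes q n1 n2 :: nat
  assumes "primepow q"
    and "card (UNIV :: 'a::{finite,field} set) = q ^ 2"
    and "odd n1" and "odd n2" and "n1 > 0" and "n2 > 0"
    and "coprime n1 n2" and "coprime n1 q" and "coprime n2 q"
    and "{f :: 'a poly. SCRIM_factor q n1 f} = {[:-1, 1:]}"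
    and "{f :: 'a poly. SCRIM_factor q n2 f} = {[:-1, 1:]}"
  shows "{f :: 'a poly. SCRIM_factor q (n1 * n2) f} = {[:-1, 1:]}"
proof -
  obtain e where ch: "prime CHAR('a)" "q = CHAR('a) ^ e" using CHAR_eq_q[OF assms(1,2)] by blast
  have x1: "SCRIM_factor q n1 ([:-1, 1:] :: 'a poly)" using assms(10) by blast
  have "[:-1, 1:] dvd monom (1::'a) (n1 * n2) - 1"
    using x1 monom_dvd_monom_mult[of n1 n2] unfolding SCRIM_factor_def using dvd_trans by blast
  then have sup: "SCRIM_factor q (n1 * n2) ([:-1, 1:] :: 'a poly)" using x1 by (simp add: SCRIM_factor_def)
  have sub: "f = [:-1, 1:]" if sf: "SCRIM_factor q (n1 * n2) f" for f :: "'a poly"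
  proof -
    have d2: "f dvd monom 1 n2 - 1" using one_sided[OF ch assms(5,6,10) sf] .
    have sf': "SCRIM_factor q (n2 * n1) f" using sf by (simp add: mult.commute)
    have d1: "f dvd monom 1 n1 - 1" using one_sided[OF ch assms(6,5,11) sf'] .
    obtain x y where xy: "n2 * x = n1 * y + gcd n2 n1" using bezout_nat[of n2 n1] assms(6) by auto
    have "gcd n2 n1 = 1" using assms(7) by (simp add: coprime_commute)
    with xy have xy1: "n2 * x = n1 * y + 1" by simp
    have a: "f dvd monom 1 (n2 * x) - 1" using d2 monom_dvd_monom_mult dvd_trans by blast
    have b: "f dvd monom 1 (n1 * y) - 1" using d1 monom_dvd_monom_mult dvd_trans by blast
    have "monom (1::'a) (n2 * x) - 1 = monom 1 1 * (monom 1 (n1 * y) - 1) + (monom 1 1 - 1)"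
      using xy1 by (simp add: algebra_simps mult_monom)
    then have eqm: "monom 1 1 - 1 = (monom (1::'a) (n2 * x) - 1) - monom 1 1 * (monom 1 (n1 * y) - 1)"
      by (simp add: algebra_simps)
    moreover have "f dvd monom (1::'a) 1 * (monom 1 (n1 * y) - 1)" using b by (rule dvd_mult)
    ultimately have "f dvd monom 1 1 - 1" using a
      by (subst eqm) (rule dvd_diff)
    then have fd: "f dvd [:-1, 1:]" by (simp only: xm1)
    have fl: "lead_coeff f = 1" and fi: "irreducible f" using sf by (auto simp: SCRIM_factor_def SCRIM_def)
    obtain c where c: "[:-1, 1:] = f * c" using fd by (elim dvdE)
    have fnz: "f \<noteq> 0" and cnz: "c \<noteq> 0" using c fl by auto
    have "degree f \<noteq> 0" using fi fnz by (metis is_unit_iff_degree irreducible_not_unit)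
    moreover have "degree (f * c) = 1" using c[symmetric] by simp
    then have "degree f + degree c = 1" using fnz cnz by (simp add: degree_mult_eq)
    ultimately have "degree c = 0" by simp
    moreover have "lead_coeff (f * c) = 1" using c[symmetric] by simp
    then have "lead_coeff c = 1" using fl by (simp add: lead_coeff_mult)
    ultimately have "c = 1" by (metis degree_eq_zeroE one_poly_eq_simps(1) lead_coeff_pCons(1) coeff_pCons_0 pCons_0_0)
    then show ?thesis using c by simp
  qed
  show ?thesis using sup sub by blast
qed

end
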